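(* $P_2 < P_1$, i.e. $P_2\le P_1$ but not $P_1\le P_2$. Moreover, for every finite digraph $G$ with $G<P_1$ we have $G\le P_2$; that is, $P_2$ is the unique coatom (unique greatest lower bound of $P_1$) of $\mathfrak P_{\mathrm{Digraphs}}$.
   Context: A digraph is a pair $(V,E)$ with $E\subseteq V^2$. A homomorphism maps edges to edges; homomorphic equivalence means homomorphisms in both directions. A primitive positive formula is $\exists y_1,\dots,y_n(\psi_1\wedge\dots\wedge\psi_m)$ where each $\psi_i$ is $\bot$, $z_1=z_2$, or $E(z_1,z_2)$. For $H=(V,E)$, a pp power of dimension $d$ is the digraph on $V^d$ with edges $\{(u,v): \phi(u,v)\text{ holds in }H\}$ for a pp formula $\phi(x_1,\dots,x_d,y_1,\dots,y_d)$. $H\le G$ means $G$ is homomorphically equivalent to a pp power of $H$; $H<G$ means $H\le G$ and not $G\le H$; $\mathfrak P_{\mathrm{Digraphs}}$ is the poset of finite digraphs modulo mutual $\le$. $P_1$ is one vertex with no edges; $P_2$ has vertices $\{0,1\}$ and the single edge $(0,1)$. *)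

theory Defs
  imports Main
begin

type_synonym 'a digraph = "'a set \<times> ('a \<times> 'a) set"

definition finite_digraph :: "'a digraph \<Rightarrow> bool" where
  "finite_digraph G \<longleftrightarrow> finite (fst G) \<and> fst G \<noteq> {} \<and> snd G \<subseteq> fst G \<times> fst G"

definition is_hom :: "'a digraph \<Rightarrow> 'b digraph \<Rightarrow> ('a \<Rightarrow> 'b) \<Rightarrow> bool" where
  "is_hom G H f \<longleftrightarrow> (\<forall>x\<in>fst G. f x \<in> fst H) \<and> (\<forall>(x,y)\<in>snd G. (f x, f y) \<in> snd H)"

definition hom_equiv :: "'a digraph \<Rightarrow> 'b digraph \<Rightarrow> bool" where
  "hom_equiv G H \<longleftrightarrow> (\<exists>f. is_hom G H f) \<and> (\<exists>g. is_hom H G g)"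

text \<open>In a pp formula of dimension d, variables 0..d-1 are x_1..x_d,
  variables d..2d-1 are y_1..y_d, and all other variables are existentially quantified.\<close>
datatype atom = Bot | Eq nat nat | Edge nat nat

fun atom_holds :: "('a \<times> 'a) set \<Rightarrow> (nat \<Rightarrow> 'a) \<Rightarrow> atom \<Rightarrow> bool" where
  "atom_holds E s Bot = False"
| "atom_holds E s (Eq i j) = (s i = s j)"
| "atom_holds E s (Edge i j) = ((s i, s j) \<in> E)"

definition pp_power :: "'a digraph \<Rightarrow> nat \<Rightarrow> atom list \<Rightarrow> 'a list digraph" where
  "pp_power H d \<phi> =
     (let W = {u. length u = d \<and> set u \<subseteq> fst H} in
      (W, {(u, v). u \<in> W \<and> v \<in> W \<and>
             (\<exists>s. (\<forall>i. s i \<in> fst H) \<and> (\<forall>i<d. s i = u ! i \<and> s (d + i) = v ! i) \<and>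
                  (\<forall>a\<in>set \<phi>. atom_holds (snd H) s a))}))"

definition pp_le :: "'a digraph \<Rightarrow> 'b digraph \<Rightarrow> bool" where
  "pp_le H G \<longleftrightarrow> (\<exists>d \<phi>. d \<ge> 1 \<and> hom_equiv G (pp_power H d \<phi>))"

definition pp_less :: "'a digraph \<Rightarrow> 'b digraph \<Rightarrow> bool" where
  "pp_less H G \<longleftrightarrow> pp_le H G \<and> \<not> pp_le G H"

definition P1 :: "nat digraph" where "P1 = ({0}, {})"
definition P2 :: "nat digraph" where "P2 = ({0, 1}, {(0, 1)})"

end

theory Submission
  imports Defs
begin

lemma pp_fst: "fst (pp_power H d \<phi>) = {u. length u = d \<and> set u \<subseteq> fst H}"
  by (simp add: pp_power_def Let_def)

lemma pp_snd: "(u,v) \<in> snd (pp_power H d \<phi>) \<longleftrightarrow>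
   u \<in> fst (pp_power H d \<phi>) \<and> v \<in> fst (pp_power H d \<phi>) \<and>
   (\<exists>s. (\<forall>i. s i \<in> fst H) \<and> (\<forall>i<d. s i = u ! i \<and> s (d + i) = v ! i) \<and>
                  (\<forall>a\<in>set \<phi>. atom_holds (snd H) s a))"
  by (simp add: pp_power_def Let_def)

lemma part1: "pp_le P2 P1"
proof -
  have "hom_equiv P1 (pp_power P2 1 [Bot])"
    unfolding hom_equiv_def
  proof
    show "\<exists>f. is_hom P1 (pp_power P2 1 [Bot]) f"
      by (rule exI[of _ "\<lambda>_. [0]"]) (simp add: is_hom_def pp_fst P1_def P2_def)
    show "\<exists>g. is_hom (pp_power P2 1 [Bot]) P1 g"
      by (rule exI[of _ "\<lambda>_. 0"]) (auto simp add: is_hom_def pp_fst pp_snd P1_def)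
  qed
  thus ?thesis unfolding pp_le_def by (intro exI[of _ 1] exI[of _ "[Bot]"]) simp
qed

lemma rep0: "set u \<subseteq> {0::nat} \<Longrightarrow> u = replicate (length u) 0"
  by (induction u) auto

lemma part2: "\<not> pp_le P1 P2"
proof
  assume "pp_le P1 P2"
  then obtain d \<phi> f g where f: "is_hom P2 (pp_power P1 d \<phi>) f" and g: "is_hom (pp_power P1 d \<phi>) P2 g"
    unfolding pp_le_def hom_equiv_def by blast
  have fv: "\<forall>x\<in>fst P2. f x \<in> fst (pp_power P1 d \<phi>)" and
       fe: "\<forall>(x,y)\<in>snd P2. (f x, f y) \<in> snd (pp_power P1 d \<phi>)"
    using f unfolding is_hom_def by (rule conjunct1, rule conjunct2)
  have e: "(f 0, f 1) \<in> snd (pp_power P1 d \<phi>)" using fe by (simp add: P2_def)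
  have "f 0 \<in> fst (pp_power P1 d \<phi>)" "f 1 \<in> fst (pp_power P1 d \<phi>)"
    using fv by (simp_all add: P2_def)
  hence "length (f 0) = d" "set (f 0) \<subseteq> {0}" "length (f 1) = d" "set (f 1) \<subseteq> {0}"
    by (simp_all add: pp_fst P1_def)
  hence eq: "f 0 = f 1" using rep0 by metis
  have ge: "\<forall>(x,y)\<in>snd (pp_power P1 d \<phi>). (g x, g y) \<in> snd P2"
    using g unfolding is_hom_def by (rule conjunct2)
  have "(g (f 0), g (f 1)) \<in> snd P2" using ge e by blast
  thus False using eq by (auto simp add: P2_def)
qed

lemma part3:
  fixes G :: "'g digraph"
  assumes fin: "finite_digraph G" and np: "\<not> pp_le P1 G"
  shows "pp_le G P2"
proof -
  have sub: "snd G \<subseteq> fst G \<times> fst G" and ne: "fst G \<noteq> {}" using fin unfolding finite_digraph_def by auto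
  obtain v where v: "v \<in> fst G" using ne by auto
  have noloop: "(x,x) \<notin> snd G" for x
  proof
    assume xx: "(x,x) \<in> snd G"
    have "hom_equiv G (pp_power P1 1 [])"
      unfolding hom_equiv_def
    proof
      show "\<exists>f. is_hom G (pp_power P1 1 []) f"
        by (rule exI[of _ "\<lambda>_. [0]"])
          (auto simp add: is_hom_def pp_fst pp_snd P1_def intro!: exI[of _ "\<lambda>_. 0"])
      show "\<exists>g. is_hom (pp_power P1 1 []) G g"
        using xx sub by (intro exI[of _ "\<lambda>_. x"]) (auto simp add: is_hom_def)
    qed
    hence "pp_le P1 G" unfolding pp_le_def by (intro exI[of _ 1] exI[of _ "[]"]) simp
    thus False using np by simp
  qed
  obtain a b where ab: "(a,b) \<in> snd G"
  proof (cases "snd G = {}")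
    case True
    have "hom_equiv G (pp_power P1 1 [Bot])"
      unfolding hom_equiv_def
    proof
      show "\<exists>f. is_hom G (pp_power P1 1 [Bot]) f"
        using True by (intro exI[of _ "\<lambda>_. [0]"]) (auto simp add: is_hom_def pp_fst P1_def)
      show "\<exists>g. is_hom (pp_power P1 1 [Bot]) G g"
        using v by (intro exI[of _ "\<lambda>_. v"]) (auto simp add: is_hom_def pp_snd)
    qed
    hence "pp_le P1 G" unfolding pp_le_def by (intro exI[of _ 1] exI[of _ "[Bot]"]) simp
    thus ?thesis using np by simp
  next
    case False
    then show ?thesis using that by auto
  qed
  have a: "a \<in> fst G" and b: "b \<in> fst G" using ab sub by auto
  define \<phi> where "\<phi> = [Edge 0 1, Eq 1 2, Eq 2 3]"
  have "hom_equiv P2 (pp_power G 2 \<phi>)"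
    unfolding hom_equiv_def
  proof
    show "\<exists>f. is_hom P2 (pp_power G 2 \<phi>) f"
    proof (rule exI[of _ "\<lambda>i. if i = 0 then [a,b] else [b,b]"])
      have ab2: "[a,b] \<in> fst (pp_power G 2 \<phi>)" "[b,b] \<in> fst (pp_power G 2 \<phi>)"
        using a b by (simp_all add: pp_fst)
      define s where "s = (\<lambda>i::nat. if i = 0 then a else b)"
      have s1: "\<forall>i. s i \<in> fst G" using a b by (simp add: s_def)
      have s2: "\<forall>i<2. s i = [a,b] ! i \<and> s (2 + i) = [b,b] ! i"
      proof (intro allI impI)
        fix i :: nat assume "i < 2"
        hence "i = 0 \<or> i = 1" by linarith
        thus "s i = [a,b] ! i \<and> s (2 + i) = [b,b] ! i" by (auto simp: s_def)
      qed
      have s3: "\<forall>x\<in>set \<phi>. atom_holds (snd G) s x"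
        using ab by (simp add: \<phi>_def s_def)
      have "([a,b],[b,b]) \<in> snd (pp_power G 2 \<phi>)"
        unfolding pp_snd by (intro conjI ab2 exI[of _ s] s1 s2 s3)
      thus "is_hom P2 (pp_power G 2 \<phi>) (\<lambda>i. if i = 0 then [a,b] else [b,b])"
        using ab2 unfolding is_hom_def P2_def by auto
    qed
    show "\<exists>g. is_hom (pp_power G 2 \<phi>) P2 g"
    proof (rule exI[of _ "\<lambda>u. if (u!0, u!1) \<in> snd G then 0 else 1"])
      have key: "(u!0, u!1) \<in> snd G \<and> (v!0, v!1) \<notin> snd G" if uv: "(u,v) \<in> snd (pp_power G 2 \<phi>)" for u v
      proof -
        obtain s where "(\<forall>i. s i \<in> fst G) \<and> (\<forall>i<2. s i = u ! i \<and> s (2 + i) = v ! i) \<and>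
                  (\<forall>a\<in>set \<phi>. atom_holds (snd G) s a)"
          using pp_snd[THEN iffD1, OF uv, THEN conjunct2, THEN conjunct2] by (elim exE)
        hence s: "\<forall>i<2. s i = u ! i \<and> s (2 + i) = v ! i"
          and h: "\<forall>a\<in>set \<phi>. atom_holds (snd G) s a" by simp_all
        have "(s 0, s 1) \<in> snd G" "s 1 = s 2" "s 2 = s 3" using h by (auto simp: \<phi>_def)
        moreover have "u!0 = s 0" "u!1 = s 1" "v!0 = s 2" "v!1 = s 3" using s[rule_format, of 0] s[rule_format, of 1]
          by (simp_all add: numeral_3_eq_3)
        ultimately show ?thesis using noloop[of "s 3"] by metis
      qed
      show "is_hom (pp_power G 2 \<phi>) P2 (\<lambda>u. if (u!0, u!1) \<in> snd G then 0 else 1)"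
        unfolding is_hom_def
      proof (intro conjI ballI)
        fix x assume "x \<in> fst (pp_power G 2 \<phi>)"
        show "(if (x!0, x!1) \<in> snd G then 0 else 1) \<in> fst P2" by (simp add: P2_def)
      next
        fix p assume p: "p \<in> snd (pp_power G 2 \<phi>)"
        obtain x y where xy: "p = (x,y)" by fastforce
        have "(x!0, x!1) \<in> snd G" "(y!0, y!1) \<notin> snd G" using key[of x y] p xy by auto
        thus "case p of (x, y) \<Rightarrow> ((\<lambda>u. if (u!0, u!1) \<in> snd G then 0 else 1) x,
             (\<lambda>u. if (u!0, u!1) \<in> snd G then 0 else 1) y) \<in> snd P2"
          using xy by (simp add: P2_def)
      qed
    qed
  qed
  thus ?thesis unfolding pp_le_def by (intro exI[of _ 2] exI[of _ \<phi>]) simp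
qed

theorem mainTheorem3:
  shows "pp_less P2 P1 \<and>
         (\<forall>G :: 'g digraph. finite_digraph G \<and> pp_less G P1 \<longrightarrow> pp_le G P2)"
proof (intro conjI allI impI)
  show "pp_less P2 P1" unfolding pp_less_def using part1 part2 by simp
next
  fix G :: "'g digraph"
  assume "finite_digraph G \<and> pp_less G P1"
  hence "finite_digraph G" "\<not> pp_le P1 G" unfolding pp_less_def by simp_all
  thus "pp_le G P2" by (rule part3)
qed

end
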